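(* Let $(a_n)_{n\ge 0}$ be complex numbers with $\#\{n\colon a_n\neq 0\}=+\infty$ and $\varlimsup_{n\to+\infty}\sqrt[n]{|a_n|}=0$. For $r>0$ let $\mathcal{N}(r)=\{n\in\mathbb{Z}_+\colon \ln(|a_n|r^n)>0\}$, $N(r)=\#\mathcal{N}(r)$ and $s(r)=2\sum_{n\in\mathcal{N}(r)}\ln(|a_n|r^n)$. Let $\varepsilon>0$. Then there exists a set $E\subset(1;+\infty)$ of finite logarithmic measure such that for all $r\in(1;+\infty)\setminus E$, $$N(r)<s^{1/2}(r)\exp\{(1+\varepsilon)\sqrt{\ln s(r)}\}.$$
   Context: A set $E\subset(1,+\infty)$ has finite logarithmic measure if $\int_E\frac{dr}{r}<+\infty$. *)

theory Defs
  imports "HOL-Analysis.Analysis" "HOL-Library.Liminf_Limsup"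
begin

definition finite_log_measure :: "real set \<Rightarrow> bool" where
  "finite_log_measure E \<longleftrightarrow> E \<in> sets lebesgue \<and>
     (\<integral>\<^sup>+ r\<in>E. ennreal (1 / r) \<partial>lebesgue) < \<infinity>"

definition Nset :: "(nat \<Rightarrow> complex) \<Rightarrow> real \<Rightarrow> nat set" where
  "Nset a r = {n. ln (cmod (a n) * r ^ n) > 0}"

definition Ncount :: "(nat \<Rightarrow> complex) \<Rightarrow> real \<Rightarrow> nat" where
  "Ncount a r = card (Nset a r)"

definition sfun :: "(nat \<Rightarrow> complex) \<Rightarrow> real \<Rightarrow> real" where
  "sfun a r = 2 * (\<Sum>n\<in>Nset a r. ln (cmod (a n) * r ^ n))"

end

theory Submission
  imports Defs
begin

lemma logint:
  assumes "0 < lo" "lo \<le> hi"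
  shows "(\<integral>\<^sup>+ r\<in>{lo..hi}. ennreal (1 / r) \<partial>lebesgue) = ennreal (ln hi - ln lo)"
proof -
  have "(\<integral>\<^sup>+ r\<in>{lo..hi}. ennreal (1 / r) \<partial>lebesgue) = (\<integral>\<^sup>+ r. ennreal (1 / r) * indicator {lo..hi} r \<partial>lborel)"
    by (simp add: nn_integral_completion)
  also have "\<dots> = ennreal (ln hi - ln lo)"
  proof (rule nn_integral_FTC_Icc)
    show "(\<lambda>x. 1/x::real) \<in> borel_measurable borel" by measurable
    fix x assume "x \<in> {lo..hi}"
    then have "x > 0" using assms by auto
    then show "(ln has_real_derivative 1/x) (at x)" by (auto intro!: derivative_eq_intros)
    show "0 \<le> 1/x" using \<open>x>0\<close> by simp
  qed fact
  finally show ?thesis .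
qed

lemma sum_distinct_nat:
  fixes A :: "nat set"
  assumes "A \<subseteq> {..<m}"
  shows "real (card A) * (real (card A) - 1) \<le> 2 * (\<Sum>n\<in>A. real n)"
  using assms
proof (induction m arbitrary: A)
  case 0 then show ?case by simp
next
  case (Suc m)
  show ?case
  proof (cases "m \<in> A")
    case False
    then have "A \<subseteq> {..<m}" using Suc.prems by (auto simp: less_Suc_eq)
    then show ?thesis using Suc.IH by blast
  next
    case True
    let ?B = "A - {m}"
    have B: "?B \<subseteq> {..<m}" using Suc.prems by (auto simp: less_Suc_eq)
    have fin: "finite ?B" using B finite_subset by blast
    have cB: "card ?B \<le> m" using card_mono[OF _ B] by simp
    have A: "A = insert m ?B" using True by auto
    have cA: "card A = Suc (card ?B)" using A fin by (metis card_insert_disjoint Diff_iff insertI1)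
    have sA: "(\<Sum>n\<in>A. real n) = real m + (\<Sum>n\<in>?B. real n)" using A fin by (metis sum.insert Diff_iff insertI1)
    have IH: "real (card ?B) * (real (card ?B) - 1) \<le> 2 * (\<Sum>n\<in>?B. real n)" using Suc.IH[OF B] .
    have e: "real (card A) * (real (card A) - 1) = real(card ?B)*(real(card ?B)-1) + 2*real(card ?B)"
      by (simp add: cA algebra_simps)
    have "real (card ?B) \<le> real m" using cB by simp
    then show ?thesis using e sA IH by linarith
  qed
qed

lemma Nset_finite:
  assumes "limsup (\<lambda>n. ereal (root n (cmod (a n)))) = 0" "r > 0"
  shows "finite (Nset a r)"
proof -
  have "eventually (\<lambda>n. ereal (root n (cmod (a n))) < ereal (1/r)) sequentially"
    by (rule Limsup_lessD) (use assms in simp)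
  then obtain N where N: "\<And>n. n \<ge> N \<Longrightarrow> root n (cmod (a n)) < 1/r"
    by (auto simp: eventually_sequentially)
  have "Nset a r \<subseteq> {..<Suc N}"
  proof
    fix n assume n: "n \<in> Nset a r"
    show "n \<in> {..<Suc N}"
    proof (rule ccontr)
      assume "\<not> ?thesis"
      then have nN: "n \<ge> N" "n > 0" by auto
      let ?x = "cmod (a n)"
      have "root n ?x < 1/r" using N nN by auto
      moreover have "root n ?x \<ge> 0" by (simp add: real_root_ge_zero)
      ultimately have "(root n ?x)^n < (1/r)^n" using nN by (intro power_strict_mono) auto
      then have "?x < (1/r)^n" using nN by (simp add: real_root_pow_pos2)
      then have "?x * r^n < 1" using assms(2) by (simp add: field_simps)
      moreover have "ln (?x * r^n) > 0" using n by (simp add: Nset_def)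
      ultimately show False
        by (metis ln_le_zero_iff ln_0 less_asym' less_eq_real_def mult_nonneg_nonneg norm_ge_zero zero_le_power assms(2) order.strict_implies_order)
    qed
  qed
  then show ?thesis using finite_subset by blast
qed

lemma s_nonneg: "sfun a r \<ge> 0"
  unfolding sfun_def Nset_def by (auto intro!: sum_nonneg)

lemma Nset_mono:
  assumes "0 < r" "r \<le> r'"
  shows "Nset a r \<subseteq> Nset a r'"
proof
  fix n assume "n \<in> Nset a r"
  then have h: "ln (cmod (a n) * r ^ n) > 0" by (simp add: Nset_def)
  have "cmod (a n) * r ^ n > 0"
    using h assms by (metis ln_0 less_irrefl mult_nonneg_nonneg norm_ge_zero order_le_less zero_le_power order.strict_implies_order)
  then have "cmod (a n) * r ^ n > 1" using h ln_gt_zero_imp_gt_one by blast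
  moreover have "cmod (a n) * r ^ n \<le> cmod (a n) * r' ^ n"
    using assms by (intro mult_left_mono power_mono) auto
  ultimately show "n \<in> Nset a r'" by (simp add: Nset_def)
qed

lemma s_mono:
  assumes fin: "\<And>r. r > 0 \<Longrightarrow> finite (Nset a r)" and "0 < r" "r \<le> r'"
  shows "sfun a r \<le> sfun a r'"
proof -
  have sub: "Nset a r \<subseteq> Nset a r'" using Nset_mono assms(2,3) .
  have "(\<Sum>n\<in>Nset a r. ln (cmod (a n) * r ^ n)) \<le> (\<Sum>n\<in>Nset a r. ln (cmod (a n) * r' ^ n))"
  proof (rule sum_mono)
    fix n assume "n \<in> Nset a r"
    then have h: "ln (cmod (a n) * r ^ n) > 0" by (simp add: Nset_def)
    have "cmod (a n) * r ^ n > 0"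
      using h assms by (metis ln_0 less_irrefl mult_nonneg_nonneg norm_ge_zero order_le_less zero_le_power order.strict_implies_order)
    moreover have "cmod (a n) * r ^ n \<le> cmod (a n) * r' ^ n"
      using assms by (intro mult_left_mono power_mono) auto
    ultimately show "ln (cmod (a n) * r ^ n) \<le> ln (cmod (a n) * r' ^ n)" by simp
  qed
  also have "\<dots> \<le> (\<Sum>n\<in>Nset a r'. ln (cmod (a n) * r' ^ n))"
    by (rule sum_mono2[OF fin sub]) (use assms in \<open>auto simp: Nset_def\<close>)
  finally show ?thesis by (simp add: sfun_def)
qed

lemma s_shift:
  assumes fin: "\<And>r. r > 0 \<Longrightarrow> finite (Nset a r)" and r: "0 < r" and h: "0 \<le> h"
  shows "sfun a r + h * (real (Ncount a r) * (real (Ncount a r) - 1)) \<le> sfun a (r * exp h)"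
proof -
  have r': "r \<le> r * exp h" using r h by simp
  have sub: "Nset a r \<subseteq> Nset a (r * exp h)" using Nset_mono r r' .
  have eq: "ln (cmod (a n) * (r * exp h) ^ n) = ln (cmod (a n) * r ^ n) + real n * h"
    if "n \<in> Nset a r" for n
  proof -
    from that have hh: "ln (cmod (a n) * r ^ n) > 0" by (simp add: Nset_def)
    have p: "cmod (a n) * r ^ n > 0"
      using hh r by (metis ln_0 less_irrefl mult_nonneg_nonneg norm_ge_zero order_le_less zero_le_power order.strict_implies_order)
    have pe: "cmod (a n) * (r * exp h) ^ n = (cmod (a n) * r ^ n) * exp (real n * h)"
      by (simp add: power_mult_distrib exp_of_nat_mult)
    have "ln (cmod (a n) * (r * exp h) ^ n) = ln ((cmod (a n) * r ^ n) * exp (real n * h))" by (simp only: pe)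
    also have "\<dots> = ln (cmod (a n) * r ^ n) + ln (exp (real n * h))" by (rule ln_mult_pos[OF p exp_gt_zero])
    finally show ?thesis by simp
  qed
  have "sfun a r + h * (real (Ncount a r) * (real (Ncount a r) - 1))
      \<le> sfun a r + h * (2 * (\<Sum>n\<in>Nset a r. real n))"
  proof -
    obtain m where "Nset a r \<subseteq> {..<m}" using fin[OF r] finite_nat_iff_bounded by blast
    from sum_distinct_nat[OF this] show ?thesis using h
      by (simp add: Ncount_def mult_left_mono)
  qed
  also have "\<dots> = 2 * (\<Sum>n\<in>Nset a r. ln (cmod (a n) * r ^ n) + real n * h)"
    by (simp add: sfun_def sum.distrib sum_distrib_right sum_distrib_left algebra_simps)
  also have "\<dots> = 2 * (\<Sum>n\<in>Nset a r. ln (cmod (a n) * (r * exp h) ^ n))"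
    using eq by simp
  also have "\<dots> \<le> 2 * (\<Sum>n\<in>Nset a (r * exp h). ln (cmod (a n) * (r * exp h) ^ n))"
  proof -
    have "(\<Sum>n\<in>Nset a r. ln (cmod (a n) * (r * exp h) ^ n)) \<le> (\<Sum>n\<in>Nset a (r * exp h). ln (cmod (a n) * (r * exp h) ^ n))"
      by (rule sum_mono2[OF fin sub]) (use r in \<open>auto simp: Nset_def\<close>)
    then show ?thesis by simp
  qed
  finally show ?thesis by (simp add: sfun_def)
qed

lemma s_unbounded:
  assumes fin: "\<And>r. r > 0 \<Longrightarrow> finite (Nset a r)" and inf: "infinite {n. a n \<noteq> 0}" and L: "L > 0"
  shows "\<exists>r0>0. \<forall>x\<ge>r0. sfun a x \<ge> L"
proof -
  obtain n where n: "a n \<noteq> 0" "n > 0"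
    using inf by (metis (mono_tags, lifting) finite_nat_set_iff_bounded_le mem_Collect_eq not_gr0 order_refl)
  let ?c = "cmod (a n)"
  have c: "?c > 0" using n by simp
  define r0 where "r0 = max 1 (exp (L/2) / ?c)"
  have r01: "r0 \<ge> 1" by (simp add: r0_def)
  have "\<forall>x\<ge>r0. sfun a x \<ge> L"
  proof (intro allI impI)
    fix x assume x: "x \<ge> r0"
    have x1: "x \<ge> 1" using x r01 by linarith
    have "x ^ n \<ge> x" using x1 n(2) by (metis One_nat_def Suc_leI power_increasing power_one_right)
    then have "x ^ n \<ge> exp (L/2) / ?c" using x by (simp add: r0_def)
    then have ge: "?c * x ^ n \<ge> exp (L/2)" using c by (simp add: field_simps)
    then have lnge: "ln (?c * x ^ n) \<ge> L/2"
      by (metis exp_gt_zero ln_exp ln_le_cancel_iff order_less_le_trans)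
    then have nin: "n \<in> Nset a x" using L by (simp add: Nset_def)
    have "L \<le> 2 * ln (?c * x ^ n)" using lnge by simp
    also have "\<dots> \<le> 2 * (\<Sum>m\<in>Nset a x. ln (cmod (a m) * x ^ m))"
      using member_le_sum[OF nin, of "\<lambda>m. ln (cmod (a m) * x ^ m)"] fin[of x] x1
      by (auto simp: Nset_def)
    finally show "sfun a x \<ge> L" by (simp add: sfun_def)
  qed
  then show ?thesis using r01 by (intro exI[of _ r0]) auto
qed

lemma exp_sqrt_summable:
  assumes "c \<ge> 2"
  shows "summable (\<lambda>k::nat. exp (- c * sqrt (real k)))"
proof (rule summable_comparison_test')
  show "summable (\<lambda>k::nat. 16 * inverse (real k ^ 2))"
    by (intro summable_mult inverse_power_summable) auto
  fix k :: nat assume k: "k \<ge> 1"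
  have "(sqrt (real k) / 2) ^ 4 \<le> exp (sqrt (real k) / 2) ^ 4"
  proof (intro power_mono)
    show "sqrt (real k) / 2 \<le> exp (sqrt (real k) / 2)" using exp_ge_add_one_self[of "sqrt (real k)/2"] by linarith
  qed simp
  also have "\<dots> = exp (2 * sqrt (real k))" by (simp flip: exp_of_nat_mult)
  finally have A0: "sqrt (real k) ^ 4 / 16 \<le> exp (2 * sqrt (real k))"
    by (simp add: power_divide)
  have "sqrt (real k) ^ 4 = (sqrt (real k) ^ 2) ^ 2" by (subst power_mult[symmetric]) simp
  then have "sqrt (real k) ^ 4 = real k ^ 2" by (simp only: real_sqrt_pow2[OF of_nat_0_le_iff])
  with A0 have A: "real k ^ 2 / 16 \<le> exp (2 * sqrt (real k))" by simp
  have "exp (- c * sqrt (real k)) \<le> exp (- 2 * sqrt (real k))" using assms by (simp add: mult_right_mono)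
  also have "\<dots> = inverse (exp (2 * sqrt (real k)))" by (simp add: exp_minus)
  also have "\<dots> \<le> inverse (real k ^ 2 / 16)" using A k by (intro le_imp_inverse_le) auto
  finally show "norm (exp (- c * sqrt (real k))) \<le> 16 * inverse (real k ^ 2)" by (simp add: field_simps)
qed

lemma final_alg:
  fixes N s \<epsilon> :: real
  assumes e: "\<epsilon> > 0" and s: "s > 0" and L1: "ln s \<ge> 1" and L9: "ln s \<ge> 9 / \<epsilon>^2"
    and N: "N * (N - 1) < exp 2 * s * exp ((2 + \<epsilon>) * sqrt (ln s))"
  shows "N < sqrt s * exp ((1 + \<epsilon>) * sqrt (ln s))"
proof (rule ccontr)
  assume "\<not> ?thesis"
  define u where "u = sqrt (ln s)"
  define X where "X = sqrt s * exp ((1 + \<epsilon>) * u)"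
  have NX: "N \<ge> X" using \<open>\<not> _\<close> by (simp add: X_def u_def)
  have u1: "u \<ge> 1" using L1 by (simp add: u_def)
  have "u^2 = ln s" using L1 by (simp add: u_def)
  then have "(\<epsilon> * u)^2 \<ge> 9" using L9 e by (simp add: power_mult_distrib field_simps)
  have eu: "\<epsilon> * u \<ge> 3"
  proof (rule ccontr)
    assume "\<not> \<epsilon> * u \<ge> 3"
    then have "\<epsilon> * u < 3" by simp
    moreover have "\<epsilon> * u \<ge> 0" using e u1 by simp
    ultimately have "(\<epsilon> * u)^2 < 3^2" by (intro power_strict_mono) auto
    with \<open>(\<epsilon> * u)^2 \<ge> 9\<close> show False by simp
  qed
  have s1: "sqrt s \<ge> 1"
  proof -
    have "s \<ge> exp 1" using L1 s by (metis exp_le_cancel_iff exp_ln)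
    moreover have "exp 1 \<ge> (1::real)" by simp
    ultimately have "s \<ge> 1" by linarith
    then show ?thesis by simp
  qed
  have e1: "exp (1::real) \<ge> 2" using exp_ge_add_one_self[of 1] by simp
  have "1 * 1 \<le> (1 + \<epsilon>) * u" using u1 e by (intro mult_mono) auto
  then have "exp ((1 + \<epsilon>) * u) \<ge> exp 1" by simp
  then have "exp ((1 + \<epsilon>) * u) \<ge> 2" using e1 by linarith
  then have "1 * 2 \<le> sqrt s * exp ((1 + \<epsilon>) * u)" using s1 by (intro mult_mono) auto
  then have X2: "X \<ge> 2" unfolding X_def by simp
  have "X * (X - 1) \<le> N * (N - 1)" using NX X2 by (intro mult_mono) auto
  moreover have "X^2 / 2 \<le> X * (X - 1)" using X2 by (simp add: power2_eq_square field_simps)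
  moreover have "X^2 = s * (exp ((2 + \<epsilon>) * u) * exp (\<epsilon> * u))"
  proof -
    have "X^2 = sqrt s ^ 2 * exp ((1 + \<epsilon>) * u) ^ 2" unfolding X_def by (rule power_mult_distrib)
    also have "\<dots> = s * exp (2 * ((1 + \<epsilon>) * u))" using s by (simp only: exp_double real_sqrt_pow2 less_imp_le)
    also have "2 * ((1 + \<epsilon>) * u) = (2 + \<epsilon>) * u + \<epsilon> * u" by (simp add: algebra_simps)
    finally show ?thesis by (simp only: exp_add)
  qed
  ultimately have "s * (exp ((2 + \<epsilon>) * u) * exp (\<epsilon> * u)) < 2 * (exp 2 * s * exp ((2 + \<epsilon>) * u))"
    using N by (simp add: u_def)
  then have "exp (\<epsilon> * u) < 2 * exp 2" using s by (simp add: field_simps)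
  moreover have "exp (\<epsilon> * u) \<ge> exp 1 * exp 2" using eu by (simp flip: exp_add)
  moreover have "exp 1 * exp 2 \<ge> 2 * exp (2::real)" using e1 by (intro mult_right_mono) auto
  ultimately show False by linarith
qed

lemma sum_one: "sum g {j} = g j" by simp

theorem lemma3p3:
  fixes a :: "nat \<Rightarrow> complex" and \<epsilon> :: real
  assumes "infinite {n. a n \<noteq> 0}"
    and "limsup (\<lambda>n. ereal (root n (cmod (a n)))) = 0"
    and "\<epsilon> > 0"
  shows "\<exists>E. E \<subseteq> {1<..} \<and> finite_log_measure E \<and>
    (\<forall>r \<in> {1<..} - E. real (Ncount a r) <
        sqrt (sfun a r) * exp ((1 + \<epsilon>) * sqrt (ln (sfun a r))))"
proof -
  have fin: "\<And>r. r > 0 \<Longrightarrow> finite (Nset a r)" using Nset_finite[OF assms(2)] by blast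
  define c where "c = 2 + \<epsilon>"
  have c2: "c \<ge> 2" using assms(3) by (simp add: c_def)
  define h where "h k = exp (- c * sqrt (real k))" for k :: nat
  have hpos: "h k > 0" for k by (simp add: h_def)
  define K0 :: nat where "K0 = nat \<lceil>max 1 (9 / \<epsilon>^2)\<rceil>"
  have K0: "real K0 \<ge> 1" "real K0 \<ge> 9 / \<epsilon>^2" unfolding K0_def by linarith+
  define A where "A k = {x. 0 < x \<and> sfun a x < exp (real k + 2)}" for k :: nat
  define \<rho> where "\<rho> k = Sup (A k)" for k
  have "\<forall>k. \<exists>R. \<forall>x\<in>A k. x \<le> R"
  proof
    fix k
    obtain r0 where "r0 > 0" "\<forall>x\<ge>r0. sfun a x \<ge> exp (real k + 2)"
      using s_unbounded[OF fin assms(1), of "exp (real k + 2)"] by auto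
    then have "\<forall>x\<in>A k. x \<le> r0" unfolding A_def by (metis mem_Collect_eq not_le order_less_le)
    then show "\<exists>R. \<forall>x\<in>A k. x \<le> R" by blast
  qed
  then have bdd: "bdd_above (A k)" for k by (auto simp: bdd_above_def)
  obtain r0 where r0: "r0 > 0" "\<forall>x\<ge>r0. sfun a x \<ge> exp (real K0)"
    using s_unbounded[OF fin assms(1), of "exp (real K0)"] by auto
  define I where "I k = {1<..} \<inter> {\<rho> k * exp (- h k) .. \<rho> k}" for k
  define E where "E = {1<..r0} \<union> (\<Union>k. I k)"
  have Esub: "E \<subseteq> {1<..}" by (auto simp: E_def I_def)
  have Eborel: "E \<in> sets borel" unfolding E_def I_def by auto
  have Eleb: "E \<in> sets lebesgue" using Eborel by simp
  define f :: "real \<Rightarrow> ennreal" where "f r = ennreal (1 / r)" for r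
  have fmeas: "f \<in> borel_measurable borel" unfolding f_def by measurable
  have Ik: "(\<integral>\<^sup>+ r\<in>I k. f r \<partial>lebesgue) \<le> ennreal (h k)" for k
  proof (cases "I k = {}")
    case True then show ?thesis by simp
  next
    case False
    then have rho1: "\<rho> k > 1" by (auto simp: I_def)
    define lo where "lo = \<rho> k * exp (- h k)"
    have lo: "lo > 0" using rho1 by (simp add: lo_def)
    have hi: "lo * exp (h k) = \<rho> k" by (simp add: lo_def mult.assoc flip: exp_add)
    have "lo \<le> lo * exp (h k)" using lo hpos[of k] by simp
    have "(\<integral>\<^sup>+ r\<in>I k. f r \<partial>lebesgue) \<le> (\<integral>\<^sup>+ r\<in>{lo..lo * exp (h k)}. f r \<partial>lebesgue)"
      by (rule nn_set_integral_set_mono) (auto simp: I_def lo_def mult.assoc simp flip: exp_add)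
    also have "\<dots> = ennreal (ln (lo * exp (h k)) - ln lo)"
      unfolding f_def by (rule logint[OF lo \<open>lo \<le> lo * exp (h k)\<close>])
    also have "ln (lo * exp (h k)) - ln lo = h k" using lo by (simp add: ln_mult_pos)
    finally show ?thesis .
  qed
  have E0: "(\<integral>\<^sup>+ r\<in>{1<..r0}. f r \<partial>lebesgue) < \<infinity>"
  proof -
    have "(\<integral>\<^sup>+ r\<in>{1<..r0}. f r \<partial>lebesgue) \<le> (\<integral>\<^sup>+ r\<in>{1..max 1 r0}. f r \<partial>lebesgue)"
      by (rule nn_set_integral_set_mono) auto
    also have "\<dots> = ennreal (ln (max 1 r0) - ln 1)"
      unfolding f_def by (rule logint) auto
    finally show ?thesis by (simp add: order_le_less_trans)
  qed
  have hsum: "summable h" unfolding h_def using exp_sqrt_summable[OF c2] by simp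
  have Ib: "I k \<in> sets borel" for k unfolding I_def by auto
  have measI: "(\<lambda>r. f r * indicator (I k) r) \<in> borel_measurable lebesgue" for k
  proof -
    have "(\<lambda>r. f r * indicator (I k) r) \<in> borel_measurable borel"
      using fmeas Ib[of k] by measurable
    then show ?thesis by (intro measurable_completion) simp
  qed
  have meas0: "(\<lambda>r. f r * indicator {1<..r0} r) \<in> borel_measurable lebesgue"
  proof -
    have "(\<lambda>r. f r * indicator {1<..r0} r) \<in> borel_measurable borel"
      using fmeas by measurable
    then show ?thesis by (intro measurable_completion) simp
  qed
  have "(\<integral>\<^sup>+ r\<in>E. f r \<partial>lebesgue) \<le>
        (\<integral>\<^sup>+ r. f r * indicator {1<..r0} r + (\<Sum>k. f r * indicator (I k) r) \<partial>lebesgue)"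
  proof (rule nn_integral_mono)
    fix r
    show "f r * indicator E r \<le> f r * indicator {1<..r0} r + (\<Sum>k. f r * indicator (I k) r)"
    proof (cases "r \<in> E")
      case False then show ?thesis by simp
    next
      case True
      show ?thesis
      proof (cases "r \<in> {1<..r0}")
        case True then show ?thesis by (intro add_increasing2) (auto simp: indicator_def)
      next
        case False
        with \<open>r \<in> E\<close> obtain j where j: "r \<in> I j" by (auto simp: E_def)
        have "f r * indicator E r = f r * indicator (I j) r" using j \<open>r \<in> E\<close> by simp
        also have "\<dots> \<le> (\<Sum>k. f r * indicator (I k) r)"
        proof -
          have "(\<Sum>i\<in>{j}. f r * indicator (I i) r) \<le> (\<Sum>k. f r * indicator (I k) r)"
            by (rule sum_le_suminf[OF summableI]) auto
          then show ?thesis by (simp only: sum_one)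
        qed
        also have "\<dots> \<le> f r * indicator {1<..r0} r + (\<Sum>k. f r * indicator (I k) r)" by simp
        finally show ?thesis .
      qed
    qed
  qed
  also have "\<dots> = (\<integral>\<^sup>+ r\<in>{1<..r0}. f r \<partial>lebesgue) + (\<Sum>k. \<integral>\<^sup>+ r\<in>I k. f r \<partial>lebesgue)"
  proof -
    have ms: "(\<lambda>r. \<Sum>k. f r * indicator (I k) r) \<in> borel_measurable lebesgue"
      by (rule borel_measurable_suminf_order) (rule measI)
    have "(\<integral>\<^sup>+ r. f r * indicator {1<..r0} r + (\<Sum>k. f r * indicator (I k) r) \<partial>lebesgue)
       = (\<integral>\<^sup>+ r. f r * indicator {1<..r0} r \<partial>lebesgue) + (\<integral>\<^sup>+ r. (\<Sum>k. f r * indicator (I k) r) \<partial>lebesgue)"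
      by (rule nn_integral_add[OF meas0 ms])
    also have "(\<integral>\<^sup>+ r. (\<Sum>k. f r * indicator (I k) r) \<partial>lebesgue) = (\<Sum>k. \<integral>\<^sup>+ r. f r * indicator (I k) r \<partial>lebesgue)"
      by (rule nn_integral_suminf) (rule measI)
    finally show ?thesis by simp
  qed
  also have "\<dots> \<le> (\<integral>\<^sup>+ r\<in>{1<..r0}. f r \<partial>lebesgue) + (\<Sum>k. ennreal (h k))"
    using Ik by (intro add_mono suminf_le) auto
  also have "(\<Sum>k. ennreal (h k)) = ennreal (\<Sum>k. h k)"
    using hsum hpos by (intro suminf_ennreal2) (auto simp: less_imp_le)
  finally have Efin: "(\<integral>\<^sup>+ r\<in>E. f r \<partial>lebesgue) < \<infinity>"
    using E0 by (simp add: order_le_less_trans ennreal_add_less_top)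
  have main: "real (Ncount a r) < sqrt (sfun a r) * exp ((1 + \<epsilon>) * sqrt (ln (sfun a r)))"
    if r: "r \<in> {1<..} - E" for r
  proof -
    have r1: "r > 1" and rE: "r \<notin> E" using r by auto
    have "r > r0" using r1 rE by (auto simp: E_def)
    then have sK: "sfun a r \<ge> exp (real K0)" using r0 by auto
    define S where "S = sfun a r"
    have Spos: "S > 0" using sK by (simp add: S_def) (metis exp_gt_zero order_less_le_trans)
    define L where "L = ln S"
    have LK: "L \<ge> real K0" using sK Spos by (simp add: L_def S_def ln_ge_iff)
    define k where "k = nat \<lfloor>L\<rfloor>"
    have L0: "L \<ge> 0" using LK by simp
    have kL: "real k \<le> L" "L < real k + 1" using L0 unfolding k_def by linarith+
    have Sk: "exp (real k) \<le> S" "S < exp (real k + 1)"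
      using kL Spos by (simp_all add: L_def ln_ge_iff) (metis exp_less_cancel_iff exp_ln)
    have "exp (real k + 1) < exp (real k + 2)" by simp
    then have "S < exp (real k + 2)" using Sk(2) by linarith
    then have rA: "r \<in> A k" using r1 by (simp add: A_def S_def)
    have rq: "r * exp (h k) \<in> A k"
    proof (rule ccontr)
      assume nq: "r * exp (h k) \<notin> A k"
      have "r \<le> \<rho> k" unfolding \<rho>_def using rA bdd by (intro cSup_upper)
      moreover have "\<rho> k \<le> r * exp (h k)" unfolding \<rho>_def
      proof (rule cSup_least)
        show "A k \<noteq> {}" using rA by auto
        fix x assume x: "x \<in> A k"
        show "x \<le> r * exp (h k)"
        proof (rule ccontr)
          assume "\<not> ?thesis"
          then have "sfun a (r * exp (h k)) \<le> sfun a x" using r1 by (intro s_mono[OF fin]) auto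
          then have "r * exp (h k) \<in> A k" using x r1 by (auto simp: A_def)
          with nq show False by simp
        qed
      qed
      ultimately have "r \<in> I k" using r1 by (auto simp: I_def field_simps exp_minus)
      then show False using rE by (auto simp: E_def)
    qed
    have shift: "S + h k * (real (Ncount a r) * (real (Ncount a r) - 1)) \<le> sfun a (r * exp (h k))"
      unfolding S_def using s_shift[OF fin, of r "h k"] r1 hpos[of k] by auto
    have "h k * (real (Ncount a r) * (real (Ncount a r) - 1)) < exp (real k + 2)"
      using shift rq Spos by (auto simp: A_def)
    then have "real (Ncount a r) * (real (Ncount a r) - 1) < exp (real k + 2) / h k"
      using hpos[of k] by (simp add: field_simps)
    also have "exp (real k + 2) / h k = exp 2 * exp (real k) * exp (c * sqrt (real k))"
      by (simp add: h_def exp_minus field_simps flip: exp_add)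
    also have "\<dots> \<le> exp 2 * S * exp ((2 + \<epsilon>) * sqrt L)"
    proof -
      have "sqrt (real k) \<le> sqrt L" using kL by simp
      then have "c * sqrt (real k) \<le> (2 + \<epsilon>) * sqrt L" using c2 by (simp add: c_def mult_left_mono)
      then have "exp (c * sqrt (real k)) \<le> exp ((2 + \<epsilon>) * sqrt L)" by simp
      then show ?thesis using Sk Spos by (intro mult_mono) auto
    qed
    finally have N: "real (Ncount a r) * (real (Ncount a r) - 1) < exp 2 * S * exp ((2 + \<epsilon>) * sqrt (ln S))"
      by (simp add: L_def)
    have "real (Ncount a r) < sqrt S * exp ((1 + \<epsilon>) * sqrt (ln S))"
      by (rule final_alg[OF assms(3) Spos _ _ N]) (use LK K0 in \<open>simp_all add: L_def\<close>)
    then show ?thesis by (simp add: S_def)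
  qed
  show ?thesis
    using Esub Eleb Efin main unfolding finite_log_measure_def f_def by blast
qed

end
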